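(* Let $d>0$ be a constant, $k,b:\mathbb{R}_+\to\mathbb{R}_+$ measurable and bounded with $\int_0^{+\infty}k=+\infty$ and $1<\int_0^{+\infty}b(a)e^{-\int_0^ak}da<+\infty$; let $\eta_1,\eta_2,c_1,c_2,\tilde c_1,\tilde c_2\ge0$, $c_1^{tot}=\eta_1+c_1>0$, $c_2^{tot}=\eta_2+c_2$. Let $(n_1^*,N_2^* )$ be the unique non-trivial nonnegative steady state of $$\partial_tn_1+\partial_an_1=-\big(k(a)+c_1^{tot}N_1+c_2^{tot}N_2\big)n_1,\quad n_1(t,0)=\int_0^{+\infty}bn_1da,$$ $$\frac{dN_2}{dt}=-(d+\tilde c_1N_1+\tilde c_2N_2)N_2+\int_0^{+\infty}(k(a)+\eta_1N_1+\eta_2N_2)n_1da,\quad N_1=\int_0^{+\infty}n_1da.$$ Then $n_1^*(a)=n_1^*(0)e^{-\int_0^a(k(u)+\lambda_0)du}$ for all $a\ge0$, where $\lambda_0>0$ is the unique solution of $\int_0^{+\infty}b(a)e^{-\int_0^a(k(u)+\lambda_0)du}da=1$. *)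

theory Defs
  imports "HOL-Analysis.Analysis"
begin

definition surv :: "(real \<Rightarrow> real) \<Rightarrow> real \<Rightarrow> real \<Rightarrow> real" where
  "surv k lam a = exp (- (LINT u:{0..a}|lborel. (k u + lam)))"

definition solves_char_eq :: "(real \<Rightarrow> real) \<Rightarrow> (real \<Rightarrow> real) \<Rightarrow> real \<Rightarrow> bool" where
  "solves_char_eq k b lam \<longleftrightarrow>
     set_integrable lborel {0..} (\<lambda>a. b a * surv k lam a) \<and>
     (LINT a:{0..}|lborel. b a * surv k lam a) = 1"

text \<open>Nonnegative steady state (n1, N2) of the system; the transport equation
  \<partial>_a n1 = -(k + c1tot N1 + c2tot N2) n1 is understood in integrated
  (absolutely continuous) form, as k is only measurable.\<close>
definition steady_state ::
  "(real \<Rightarrow> real) \<Rightarrow> (real \<Rightarrow> real) \<Rightarrow> real \<Rightarrow> real \<Rightarrow> real \<Rightarrow> real \<Rightarrow> real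
   \<Rightarrow> real \<Rightarrow> real \<Rightarrow> (real \<Rightarrow> real) \<Rightarrow> real \<Rightarrow> bool" where
  "steady_state k b d \<eta>1 \<eta>2 c1 c2 ct1 ct2 n1 N2 \<longleftrightarrow>
     (\<forall>a\<ge>0. 0 \<le> n1 a) \<and> 0 \<le> N2 \<and> set_integrable lborel {0..} n1 \<and>
     (let N1 = (LINT a:{0..}|lborel. n1 a) in
       (\<forall>a\<ge>0. n1 a = n1 0 -
           (LINT u:{0..a}|lborel. (k u + (\<eta>1 + c1) * N1 + (\<eta>2 + c2) * N2) * n1 u)) \<and>
       n1 0 = (LINT a:{0..}|lborel. b a * n1 a) \<and>
       0 = - (d + ct1 * N1 + ct2 * N2) * N2
           + (LINT a:{0..}|lborel. (k a + \<eta>1 * N1 + \<eta>2 * N2) * n1 a))"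

definition nontrivial :: "(real \<Rightarrow> real) \<Rightarrow> real \<Rightarrow> bool" where
  "nontrivial n1 N2 \<longleftrightarrow> (\<exists>a\<ge>0. n1 a \<noteq> 0) \<or> N2 \<noteq> 0"

end

theory Submission
  imports Defs
begin

lemma quad_const:
  fixes F :: "real \<Rightarrow> real"
  assumes A: "A \<ge> 0" and C: "C \<ge> 0"
    and bd: "\<And>s t. 0 \<le> s \<Longrightarrow> s \<le> t \<Longrightarrow> t \<le> A \<Longrightarrow> \<bar>F t - F s\<bar> \<le> C * (t - s)^2"
  shows "F A = F 0"
proof (rule ccontr)
  assume ne: "F A \<noteq> F 0"
  define e where "e = \<bar>F A - F 0\<bar>"
  have e: "e > 0" using ne by (simp add: e_def)
  have key: "e \<le> C * A^2 / real N" if N: "N > 0" for N :: nat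
  proof -
    define x where "x j = real j * A / real N" for j :: nat
    have x0: "x 0 = 0" and xN: "x N = A" using N by (auto simp: x_def)
    have "F A - F 0 = (\<Sum>j<N. F (x (Suc j)) - F (x j))"
      by (subst sum_lessThan_telescope) (simp add: x0 xN)
    hence "e \<le> (\<Sum>j<N. \<bar>F (x (Suc j)) - F (x j)\<bar>)"
      unfolding e_def by (metis sum_abs)
    also have "\<dots> \<le> (\<Sum>j<N. C * (A / real N)^2)"
    proof (rule sum_mono)
      fix j assume j: "j \<in> {..<N}"
      have "0 \<le> x j" using A by (simp add: x_def)
      moreover have "x j \<le> x (Suc j)" using A N by (simp add: x_def divide_right_mono mult_right_mono)
      moreover have "x (Suc j) \<le> A"
      proof -
        have "real (Suc j) \<le> real N" using j by simp
        hence "real (Suc j) * A \<le> real N * A" using A by (simp add: mult_right_mono)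
        thus ?thesis using N by (simp add: x_def divide_le_eq mult.commute)
      qed
      moreover have "x (Suc j) - x j = A / real N" by (simp add: x_def add_divide_distrib distrib_right)
      ultimately show "\<bar>F (x (Suc j)) - F (x j)\<bar> \<le> C * (A / real N)^2"
        using bd by metis
    qed
    also have "\<dots> = C * A^2 / real N" using N by (simp add: power2_eq_square field_simps)
    finally show ?thesis .
  qed
  obtain N :: nat where N: "C * A^2 / e < real N" using reals_Archimedean2 by blast
  have Npos: "N > 0" proof (rule ccontr)
    assume "\<not> N > 0" hence "N = 0" by simp
    moreover have "0 \<le> C * A^2 / e" using C e by simp
    ultimately show False using N by simp
  qed
  have "e \<le> C * A^2 / real N" using key Npos by blast
  hence "e * real N \<le> C * A^2" using Npos by (simp add: le_divide_eq)
  moreover have "C * A^2 < e * real N" using N e by (simp add: divide_less_eq mult.commute)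
  ultimately show False by linarith
qed

lemma sbm_iff:
  fixes f :: "real \<Rightarrow> real"
  assumes "S \<in> sets lborel"
  shows "set_borel_measurable lborel S f \<longleftrightarrow> f \<in> borel_measurable (restrict_space lborel S)"
  using assms by (simp add: set_borel_measurable_def borel_measurable_restrict_space_iff)

lemma si_const: "set_integrable lborel {a::real..b} (\<lambda>_. c::real)"
  unfolding set_integrable_def by (intro integrable_scaleR_left) (auto simp: integrable_indicator_iff emeasure_lborel_Icc_eq)

lemma si_bound:
  fixes f :: "real \<Rightarrow> real"
  assumes m: "f \<in> borel_measurable (restrict_space lborel {0..})" and bd: "\<And>x. x \<ge> 0 \<Longrightarrow> \<bar>f x\<bar> \<le> C"
  shows "set_integrable lborel {0..a} f"
proof -
  have "set_borel_measurable lborel {0..} f" using m by (simp add: sbm_iff)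
  hence m2: "set_borel_measurable lborel {0..a} f" by (rule set_borel_measurable_subset) auto
  have C0: "C \<ge> 0" using bd[of 0] by simp
  show ?thesis
    by (rule set_integrable_bound[OF si_const[of _ _ C] m2]) (use bd C0 in auto)
qed

lemma surv_shift:
  assumes ki: "set_integrable lborel {0..x} k" and x: "x \<ge> 0"
  shows "surv k lam x = surv k 0 x * exp (- (lam * x))"
proof -
  have "(LINT u:{0..x}|lborel. k u + lam) = (LINT u:{0..x}|lborel. k u) + (LINT u:{0..x}|lborel. lam)"
    using ki si_const by (rule set_integral_add)
  also have "(LINT u:{0..x}|lborel. lam) = lam * x"
    using set_borel_integral_eq_integral(2)[OF si_const[of 0 x lam]] x by simp
  finally show ?thesis by (simp add: surv_def exp_add[symmetric])
qed

lemma char_unique_aux: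
  fixes k b :: "real \<Rightarrow> real"
  assumes b_nonneg: "\<forall>a\<ge>0. 0 \<le> b a"
    and kint: "\<And>x. x \<ge> 0 \<Longrightarrow> set_integrable lborel {0..x} k"
    and R0: "(\<integral>\<^sup>+ a\<in>{0..}. ennreal (b a * surv k 0 a) \<partial>lborel) \<noteq> 0"
    and s1: "solves_char_eq k b l1" and s2: "solves_char_eq k b l2" and lt: "l1 < l2"
  shows False
proof -
  define g1 where "g1 = (\<lambda>a. b a * surv k l1 a)"
  define g2 where "g2 = (\<lambda>a. b a * surv k l2 a)"
  have i1: "set_integrable lborel {0..} g1" and v1: "(LINT a:{0..}|lborel. g1 a) = 1"
    using s1 by (simp_all add: solves_char_eq_def g1_def)
  have i2: "set_integrable lborel {0..} g2" and v2: "(LINT a:{0..}|lborel. g2 a) = 1"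
    using s2 by (simp_all add: solves_char_eq_def g2_def)
  have di: "set_integrable lborel {0..} (\<lambda>a. g1 a - g2 a)"
    and dv: "(LINT a:{0..}|lborel. g1 a - g2 a) = 0"
    using set_integral_diff[OF i1 i2] v1 v2 by simp_all
  have gdiff: "g1 x - g2 x = b x * surv k 0 x * (exp (- (l1 * x)) - exp (- (l2 * x)))" if "x \<ge> 0" for x
    using surv_shift[OF kint[OF that] that, of l1] surv_shift[OF kint[OF that] that, of l2]
    by (simp add: g1_def g2_def algebra_simps)
  have survpos: "surv k 0 x > 0" for x by (simp add: surv_def)
  define f where "f = (\<lambda>x. indicator {0..} x *\<^sub>R (g1 x - g2 x))"
  have fi: "integrable lborel f" using di by (simp add: set_integrable_def f_def)
  have fnn: "0 \<le> f x" for x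
  proof (cases "x \<ge> 0")
    case True
    have "exp (- (l2 * x)) \<le> exp (- (l1 * x))" using lt True by (simp add: mult_right_mono)
    hence "0 \<le> b x * surv k 0 x * (exp (- (l1 * x)) - exp (- (l2 * x)))"
      using b_nonneg True survpos[of x] by simp
    then show ?thesis using True gdiff[OF True] by (simp add: f_def)
  qed (simp add: f_def)
  have "integral\<^sup>L lborel f = 0" using dv by (simp add: set_lebesgue_integral_def f_def)
  hence ae: "AE x in lborel. f x = 0"
    using integral_nonneg_eq_0_iff_AE[OF fi] fnn by simp
  have aez: "AE x in lborel. ennreal (b x * surv k 0 x) * indicator {0..} x = 0"
    using ae AE_lborel_singleton[of "0::real"]
  proof eventually_elim
    case (elim x)
    show ?case
    proof (cases "x > 0")
      case True
      have "exp (- (l2 * x)) < exp (- (l1 * x))" using lt True by simp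
      moreover have "g1 x - g2 x = 0" using elim True by (simp add: f_def)
      ultimately have "b x * surv k 0 x = 0" using gdiff[of x] True by simp
      then show ?thesis by auto
    next
      case False
      then have "x < 0" using elim by simp
      then show ?thesis by simp
    qed
  qed
  have "(\<integral>\<^sup>+ a\<in>{0..}. ennreal (b a * surv k 0 a) \<partial>lborel) = 0"
    using nn_integral_cong_AE[OF aez] by simp
  thus False using R0 by simp
qed

lemma exp_quad_bound:
  fixes D :: real assumes D: "D \<ge> 0"
  shows "\<bar>(1 - D) * exp D - 1\<bar> \<le> D^2 * exp D"
proof -
  have e1: "1 + D \<le> exp D" using exp_ge_add_one_self by simp
  have e2: "1 - D \<le> exp (- D)" using exp_ge_add_one_self[of "-D"] by simp
  have "(1 - D) * exp D \<le> exp (-D) * exp D"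
    by (rule mult_right_mono[OF e2]) simp
  hence up: "(1 - D) * exp D \<le> 1" by (simp add: exp_minus field_simps)
  have "1 - D + D^2 = (D - 1/2)^2 + 3/4" by (simp add: power2_eq_square algebra_simps)
  moreover have "0 \<le> (D - 1/2)^2" by simp
  ultimately have pos: "0 \<le> 1 - D + D^2" by linarith
  have "1 \<le> (1 - D + D^2) * (1 + D)" using D by (simp add: algebra_simps power2_eq_square power3_eq_cube)
  also have "\<dots> \<le> (1 - D + D^2) * exp D" by (rule mult_left_mono[OF e1 pos])
  finally have "1 \<le> (1 - D + D^2) * exp D" .
  hence "1 - (1 - D) * exp D \<le> D^2 * exp D" by (simp add: algebra_simps)
  thus ?thesis using up by linarith
qed

lemma core:
  fixes h n :: "real \<Rightarrow> real"
  assumes hint: "\<And>a. a \<ge> 0 \<Longrightarrow> h integrable_on {0..a}"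
    and hnint: "\<And>a. a \<ge> 0 \<Longrightarrow> (\<lambda>u. h u * n u) integrable_on {0..a}"
    and h0: "\<And>u. u \<ge> 0 \<Longrightarrow> 0 \<le> h u" and hL: "\<And>u. u \<ge> 0 \<Longrightarrow> h u \<le> L"
    and n0: "\<And>u. u \<ge> 0 \<Longrightarrow> 0 \<le> n u"
    and eq: "\<And>a. a \<ge> 0 \<Longrightarrow> n a = n 0 - integral {0..a} (\<lambda>u. h u * n u)"
    and a: "a \<ge> 0"
  shows "n a = n 0 * exp (- integral {0..a} h)"
proof -
  define B where "B = n 0"
  define K where "K x = integral {0..x} h" for x
  define g where "g = (\<lambda>u. h u * n u)"
  have L0: "L \<ge> 0" using h0[of 0] hL[of 0] by simp
  have B0: "B \<ge> 0" using n0[of 0] by (simp add: B_def)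
  have hsub: "h integrable_on {s..t}" if "0 \<le> s" "s \<le> t" for s t
    using integrable_subinterval_real[OF hint[of t]] that by auto
  have gsub: "g integrable_on {s..t}" if "0 \<le> s" "s \<le> t" for s t
    unfolding g_def using integrable_subinterval_real[OF hnint[of t]] that by auto
  have Kdiff: "K t - K s = integral {s..t} h" if "0 \<le> s" "s \<le> t" for s t
    using Henstock_Kurzweil_Integration.integral_combine[OF that hint[of t]] that by (simp add: K_def)
  have ndiff: "n t - n s = - integral {s..t} g" if "0 \<le> s" "s \<le> t" for s t
    using Henstock_Kurzweil_Integration.integral_combine[OF that hnint[of t]] that eq[of s] eq[of t] by (simp add: g_def)
  have g0: "0 \<le> g u" "g u \<le> L * B" if "u \<ge> 0" for u
  proof -
    show "0 \<le> g u" using h0 n0 that by (simp add: g_def)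
    have "integral {0..u} g \<ge> 0" using gsub[of 0 u] that h0 n0 by (intro integral_nonneg) (auto simp: g_def)
    hence "n u \<le> B" using eq[OF that] by (simp add: B_def g_def)
    thus "g u \<le> L * B" using h0[OF that] hL[OF that] n0[OF that] L0 unfolding g_def by (simp add: mult_mono)
  qed
  have nlip: "\<bar>n u - n s\<bar> \<le> L * B * (u - s)" if "0 \<le> s" "s \<le> u" for s u
  proof -
    have "integral {s..u} g \<le> integral {s..u} (\<lambda>_. L * B)"
      using gsub[OF that] g0 that by (intro integral_le) auto
    moreover have "integral {s..u} g \<ge> 0"
      using gsub[OF that] g0 that by (intro integral_nonneg) auto
    ultimately show ?thesis using ndiff[OF that] that by (simp add: ac_simps)
  qed
  have Kb: "0 \<le> K t - K s" "K t - K s \<le> L * (t - s)" if "0 \<le> s" "s \<le> t" for s t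
  proof -
    have "integral {s..t} h \<le> integral {s..t} (\<lambda>_. L)"
      using hsub[OF that] hL that by (intro integral_le) auto
    moreover have "integral {s..t} h \<ge> 0"
      using hsub[OF that] h0 that by (intro integral_nonneg) auto
    ultimately show "0 \<le> K t - K s" "K t - K s \<le> L * (t - s)" using Kdiff[OF that] that
      by (simp_all add: ac_simps)
  qed
  have rbound: "\<bar>n t - n s * (1 - (K t - K s))\<bar> \<le> L * L * B * (t - s)^2" if "0 \<le> s" "s \<le> t" for s t
  proof -
    have id: "integral {s..t} (\<lambda>u. g u - n s * h u) = integral {s..t} g - n s * integral {s..t} h"
    proof -
      have "(\<lambda>u. n s * h u) integrable_on {s..t}" using integrable_cmul[OF hsub[OF that], of "n s"] by simp
      hence "integral {s..t} (\<lambda>u. g u - n s * h u) = integral {s..t} g - integral {s..t} (\<lambda>u. n s * h u)"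
        using gsub[OF that] by (rule integral_diff[rotated])
      thus ?thesis by simp
    qed
    have "n t - n s * (1 - (K t - K s)) = - integral {s..t} (\<lambda>u. g u - n s * h u)"
      unfolding id using ndiff[OF that] Kdiff[OF that] by (simp add: algebra_simps)
    hence "\<bar>n t - n s * (1 - (K t - K s))\<bar> = norm (integral {s..t} (\<lambda>u. h u * (n u - n s)))"
      by (simp add: g_def algebra_simps)
    also have "\<dots> \<le> integral {s..t} (\<lambda>_. L * (L * B * (t - s)))"
    proof (rule integral_norm_bound_integral)
      show "(\<lambda>u. h u * (n u - n s)) integrable_on {s..t}"
        using integrable_diff[OF gsub[OF that] integrable_cmul[OF hsub[OF that], of "n s"]]
        by (simp add: g_def algebra_simps)
      show "(\<lambda>_. L * (L * B * (t - s))) integrable_on {s..t}" by (rule integrable_const_ivl)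
      fix u assume u: "u \<in> {s..t}"
      have "\<bar>n u - n s\<bar> \<le> L * B * (t - s)"
        using nlip[of s u] u that L0 B0 by (auto intro: order_trans[OF _ mult_left_mono])
      thus "norm (h u * (n u - n s)) \<le> L * (L * B * (t - s))"
        using h0 hL u that L0 by (auto simp: abs_mult intro!: mult_mono)
    qed
    also have "\<dots> = L * L * B * (t - s)^2" using that by (simp add: power2_eq_square)
    finally show ?thesis .
  qed
  define F where "F x = n x * exp (K x)" for x
  define C where "C = 2 * L^2 * B * exp (2 * L * a)"
  have C0: "C \<ge> 0" using B0 by (simp add: C_def)
  have Fb: "\<bar>F t - F s\<bar> \<le> C * (t - s)^2" if "0 \<le> s" "s \<le> t" "t \<le> a" for s t
  proof -
    define D where "D = K t - K s"
    define r where "r = n t - n s * (1 - D)"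
    have D0: "0 \<le> D" and DL: "D \<le> L * (t - s)" using Kb[of s t] that by (auto simp: D_def)
    have r: "\<bar>r\<bar> \<le> L * L * B * (t - s)^2" using rbound[of s t] that by (simp add: r_def D_def)
    have Kt: "K t = K s + D" by (simp add: D_def)
    have Ks: "K s \<le> L * a"
    proof -
      have "K s - K 0 \<le> L * (s - 0)" using Kb[of 0 s] that by simp
      moreover have "K 0 = 0" by (simp add: K_def)
      moreover have "L * s \<le> L * a" using that L0 by (simp add: mult_left_mono)
      ultimately show ?thesis by simp
    qed
    have DLa: "D \<le> L * a" using DL that L0 by (smt (verit) mult_left_mono)
    have eD: "exp D \<le> exp (L * a)" using DLa by simp
    have eKs: "exp (K s) \<le> exp (L * a)" using Ks by simp
    have s0: "0 \<le> s" using that by simp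
    have "0 \<le> integral {0..s} g" using gsub[of 0 s] g0 s0 by (intro integral_nonneg) auto
    hence ns: "0 \<le> n s" "n s \<le> B" using n0[OF s0] eq[OF s0] by (simp_all add: B_def g_def)
    have "F t - F s = exp (K s) * (n s * ((1 - D) * exp D - 1) + r * exp D)"
      unfolding F_def Kt r_def by (simp add: exp_add algebra_simps)
    hence "\<bar>F t - F s\<bar> = exp (K s) * \<bar>n s * ((1 - D) * exp D - 1) + r * exp D\<bar>"
      by (simp add: abs_mult)
    also have "\<dots> \<le> exp (L * a) * (B * (D^2 * exp D) + L * L * B * (t - s)^2 * exp D)"
    proof (rule mult_mono[OF eKs])
      have "\<bar>n s * ((1 - D) * exp D - 1)\<bar> \<le> B * (D^2 * exp D)"
        using ns exp_quad_bound[OF D0] by (simp add: abs_mult mult_mono)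
      moreover have "\<bar>r * exp D\<bar> \<le> L * L * B * (t - s)^2 * exp D"
        using r by (simp add: abs_mult)
      ultimately show "\<bar>n s * ((1 - D) * exp D - 1) + r * exp D\<bar> \<le> B * (D^2 * exp D) + L * L * B * (t - s)^2 * exp D"
        by (smt (verit))
    qed simp_all
    also have "\<dots> \<le> exp (L * a) * (B * ((L * (t - s))^2 * exp (L * a)) + L * L * B * (t - s)^2 * exp (L * a))"
    proof -
      have "D^2 \<le> (L * (t - s))^2" using D0 DL by (simp add: power_mono)
      hence "D^2 * exp D \<le> (L * (t - s))^2 * exp (L * a)" using eD by (simp add: mult_mono)
      hence "B * (D^2 * exp D) \<le> B * ((L * (t - s))^2 * exp (L * a))" using B0 by (simp add: mult_left_mono)
      moreover have "L * L * B * (t - s)^2 * exp D \<le> L * L * B * (t - s)^2 * exp (L * a)"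
        using eD B0 by (simp add: mult_left_mono)
      ultimately show ?thesis by (simp add: mult_left_mono)
    qed
    also have "\<dots> = C * (t - s)^2"
      by (simp add: C_def power2_eq_square algebra_simps mult_exp_exp)
    finally show ?thesis .
  qed
  have "F a = F 0" by (rule quad_const[OF a C0 Fb])
  moreover have "K 0 = 0" by (simp add: K_def)
  ultimately have "n a * exp (K a) = n 0" by (simp add: F_def)
  hence "n a = n 0 * exp (- K a)" by (simp add: exp_minus field_simps)
  thus ?thesis by (simp add: K_def)
qed

theorem proposition5:
  fixes k b n1 :: "real \<Rightarrow> real"
    and d \<eta>1 \<eta>2 c1 c2 ct1 ct2 N2 :: real
  assumes d_pos: "d > 0"
    and k_meas: "set_borel_measurable lborel {0..} k"
    and b_meas: "set_borel_measurable lborel {0..} b"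
    and k_nonneg: "\<forall>a\<ge>0. 0 \<le> k a" and b_nonneg: "\<forall>a\<ge>0. 0 \<le> b a"
    and k_bdd: "\<exists>M. \<forall>a\<ge>0. k a \<le> M" and b_bdd: "\<exists>M. \<forall>a\<ge>0. b a \<le> M"
    and k_int_inf: "(\<integral>\<^sup>+ a\<in>{0..}. ennreal (k a) \<partial>lborel) = \<infinity>"
    and R0_gt1: "1 < (\<integral>\<^sup>+ a\<in>{0..}. ennreal (b a * surv k 0 a) \<partial>lborel)"
    and R0_fin: "(\<integral>\<^sup>+ a\<in>{0..}. ennreal (b a * surv k 0 a) \<partial>lborel) < \<infinity>"
    and params: "\<eta>1 \<ge> 0" "\<eta>2 \<ge> 0" "c1 \<ge> 0" "c2 \<ge> 0" "ct1 \<ge> 0" "ct2 \<ge> 0"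
    and c1tot_pos: "\<eta>1 + c1 > 0"
    and ss: "steady_state k b d \<eta>1 \<eta>2 c1 c2 ct1 ct2 n1 N2"
    and ss_nontriv: "nontrivial n1 N2"
    and ss_unique: "\<forall>m M. steady_state k b d \<eta>1 \<eta>2 c1 c2 ct1 ct2 m M \<and> nontrivial m M
                      \<longrightarrow> (\<forall>a\<ge>0. m a = n1 a) \<and> M = N2"
  shows "\<exists>lam0>0. solves_char_eq k b lam0 \<and> (\<forall>lam. solves_char_eq k b lam \<longrightarrow> lam = lam0) \<and>
           (\<forall>a\<ge>0. n1 a = n1 0 * surv k lam0 a)"
proof -
  define N1 where "N1 = (LINT a:{0..}|lborel. n1 a)"
  define \<Lambda> where "\<Lambda> = (\<eta>1 + c1) * N1 + (\<eta>2 + c2) * N2"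
  have ssu: "(\<forall>a\<ge>0. 0 \<le> n1 a) \<and> 0 \<le> N2 \<and> set_integrable lborel {0..} n1 \<and>
       ((\<forall>a\<ge>0. n1 a = n1 0 - (LINT u:{0..a}|lborel. (k u + (\<eta>1 + c1) * N1 + (\<eta>2 + c2) * N2) * n1 u)) \<and>
        n1 0 = (LINT a:{0..}|lborel. b a * n1 a) \<and>
        0 = - (d + ct1 * N1 + ct2 * N2) * N2 + (LINT a:{0..}|lborel. (k a + \<eta>1 * N1 + \<eta>2 * N2) * n1 a))"
    using ss unfolding steady_state_def Let_def N1_def by assumption
  have n1nn: "\<forall>a\<ge>0. 0 \<le> n1 a" using ssu by (rule conjunct1)
  have N2nn: "0 \<le> N2" using ssu[THEN conjunct2] by (rule conjunct1)
  have n1int: "set_integrable lborel {0..} n1" using ssu[THEN conjunct2, THEN conjunct2] by (rule conjunct1)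
  note ssr = ssu[THEN conjunct2, THEN conjunct2, THEN conjunct2]
  have eqn: "\<forall>a\<ge>0. n1 a = n1 0 - (LINT u:{0..a}|lborel. (k u + (\<eta>1 + c1) * N1 + (\<eta>2 + c2) * N2) * n1 u)"
    using ssr by (rule conjunct1)
  have bc: "n1 0 = (LINT a:{0..}|lborel. b a * n1 a)" using ssr[THEN conjunct2] by (rule conjunct1)
  have N2eq: "0 = - (d + ct1 * N1 + ct2 * N2) * N2 + (LINT a:{0..}|lborel. (k a + \<eta>1 * N1 + \<eta>2 * N2) * n1 a)"
    using ssr[THEN conjunct2] by (rule conjunct2)
  have N1nn: "N1 \<ge> 0"
    unfolding N1_def set_borel_integral_eq_integral(2)[OF n1int]
    using set_borel_integral_eq_integral(1)[OF n1int] n1nn by (intro integral_nonneg) auto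
  have Lnn: "\<Lambda> \<ge> 0" unfolding \<Lambda>_def
    using N1nn N2nn params(1-4) by (intro add_nonneg_nonneg mult_nonneg_nonneg) auto
  obtain Mk where Mk: "\<forall>a\<ge>0. k a \<le> Mk" using k_bdd by blast
  define L where "L = Mk + \<Lambda>"
  have km: "k \<in> borel_measurable (restrict_space lborel {0..})" using k_meas by (simp add: sbm_iff)
  have nm: "n1 \<in> borel_measurable (restrict_space lborel {0..})"
  proof -
    have "set_borel_measurable lborel {0..} n1"
      using n1int unfolding set_integrable_def set_borel_measurable_def by (rule borel_measurable_integrable)
    thus ?thesis by (simp add: sbm_iff)
  qed
  have hm: "(\<lambda>u. k u + \<Lambda>) \<in> borel_measurable (restrict_space lborel {0..})" using km by (intro borel_measurable_add borel_measurable_const)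
  have hnm: "(\<lambda>u. (k u + \<Lambda>) * n1 u) \<in> borel_measurable (restrict_space lborel {0..})" using km nm by (intro borel_measurable_times borel_measurable_add borel_measurable_const)
  have kint: "set_integrable lborel {0..x} k" for x
    by (rule si_bound[OF km, of Mk]) (use Mk k_nonneg in auto)
  have hint: "set_integrable lborel {0..x} (\<lambda>u. k u + \<Lambda>)" for x
    by (rule si_bound[OF hm, of L]) (use Mk k_nonneg Lnn in \<open>auto simp: L_def\<close>)
  have hnint: "set_integrable lborel {0..x} (\<lambda>u. (k u + \<Lambda>) * n1 u)" for x
  proof (rule set_integrable_bound)
    show "set_integrable lborel {0..x} (\<lambda>u. L * n1 u)"
      using set_integrable_subset[OF n1int, of "{0..x}"] by auto
    have "set_borel_measurable lborel {0..} (\<lambda>u. (k u + \<Lambda>) * n1 u)" using hnm by (simp add: sbm_iff)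
    thus "set_borel_measurable lborel {0..x} (\<lambda>u. (k u + \<Lambda>) * n1 u)"
      by (rule set_borel_measurable_subset) auto
    show "AE u in lborel. u \<in> {0..x} \<longrightarrow> norm ((k u + \<Lambda>) * n1 u) \<le> norm (L * n1 u)"
    proof (rule AE_I2, rule impI)
      fix u assume u: "u \<in> {0..x}"
      have "k 0 \<le> Mk" "0 \<le> k 0" using Mk k_nonneg by auto
      hence L0: "L \<ge> 0" using Lnn unfolding L_def by linarith
      have "(k u + \<Lambda>) * n1 u \<le> L * n1 u"
        using Mk n1nn u by (intro mult_right_mono) (auto simp: L_def)
      thus "norm ((k u + \<Lambda>) * n1 u) \<le> norm (L * n1 u)"
        using k_nonneg Lnn n1nn u L0 by (simp add: abs_mult)
    qed
  qed
  have hfun: "(\<lambda>u. (k u + (\<eta>1 + c1) * N1 + (\<eta>2 + c2) * N2) * n1 u) = (\<lambda>u. (k u + \<Lambda>) * n1 u)"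
    by (simp add: \<Lambda>_def add.assoc)
  have sol: "n1 a = n1 0 * surv k \<Lambda> a" if a: "a \<ge> 0" for a
  proof -
    have "n1 a = n1 0 * exp (- integral {0..a} (\<lambda>u. k u + \<Lambda>))"
    proof (rule core[where L = L])
      show "(\<lambda>u. k u + \<Lambda>) integrable_on {0..x}" for x using set_borel_integral_eq_integral(1)[OF hint] .
      show "(\<lambda>u. (k u + \<Lambda>) * n1 u) integrable_on {0..x}" for x using set_borel_integral_eq_integral(1)[OF hnint] .
      show "0 \<le> k u + \<Lambda>" if "u \<ge> 0" for u using k_nonneg Lnn that by simp
      show "k u + \<Lambda> \<le> L" if "u \<ge> 0" for u using Mk that by (simp add: L_def)
      show "0 \<le> n1 u" if "u \<ge> 0" for u using n1nn that by simp
      show "n1 x = n1 0 - integral {0..x} (\<lambda>u. (k u + \<Lambda>) * n1 u)" if "x \<ge> 0" for x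
      proof -
        from eqn that have "n1 x = n1 0 - (LINT u:{0..x}|lborel. (k u + (\<eta>1 + c1) * N1 + (\<eta>2 + c2) * N2) * n1 u)"
          by blast
        thus ?thesis unfolding hfun set_borel_integral_eq_integral(2)[OF hnint] .
      qed
    qed (rule a)
    thus ?thesis unfolding surv_def using set_borel_integral_eq_integral(2)[OF hint] by simp
  qed
  have n0pos: "n1 0 > 0"
  proof (rule ccontr)
    assume "\<not> n1 0 > 0"
    hence z: "n1 0 = 0" using n1nn by force
    have z2: "\<forall>a. a \<in> {0..} \<longrightarrow> n1 a = 0"
    proof (intro allI impI)
      fix a :: real assume "a \<in> {0..}"
      hence "n1 a = n1 0 * surv k \<Lambda> a" by (intro sol) simp
      thus "n1 a = 0" using z by simp
    qed
    have "N1 = 0" unfolding N1_def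
      by (subst set_lebesgue_integral_cong[where g = "\<lambda>_. 0"]) (use z2 in auto)
    have "(LINT a:{0..}|lborel. (k a + \<eta>1 * N1 + \<eta>2 * N2) * n1 a) = 0"
      by (subst set_lebesgue_integral_cong[where g = "\<lambda>_. 0"]) (use z2 in auto)
    with N2eq \<open>N1 = 0\<close> have "(d + ct2 * N2) * N2 = 0" by (simp add: algebra_simps)
    moreover have "d + ct2 * N2 > 0" using d_pos params N2nn by (simp add: add_pos_nonneg)
    ultimately have "N2 = 0" by simp
    moreover have "\<exists>a\<ge>0. n1 a \<noteq> 0" if "N2 = 0" using ss_nontriv that by (simp add: nontrivial_def)
    ultimately show False using z2 by auto
  qed
  have bnint: "set_integrable lborel {0..} (\<lambda>a. b a * n1 a)"
  proof (rule ccontr)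
    assume "\<not> ?thesis"
    hence "(LINT a:{0..}|lborel. b a * n1 a) = 0"
      by (simp add: set_integrable_def set_lebesgue_integral_def not_integrable_integral_eq)
    thus False using bc n0pos by simp
  qed
  have eqfun: "\<forall>a. a \<in> {0..} \<longrightarrow> b a * surv k \<Lambda> a = (1 / n1 0) * (b a * n1 a)"
  proof (intro allI impI)
    fix a :: real assume "a \<in> {0..}"
    hence "n1 a = n1 0 * surv k \<Lambda> a" by (intro sol) simp
    thus "b a * surv k \<Lambda> a = (1 / n1 0) * (b a * n1 a)" using n0pos by simp
  qed
  have charL: "solves_char_eq k b \<Lambda>"
    unfolding solves_char_eq_def
  proof
    show "set_integrable lborel {0..} (\<lambda>a. b a * surv k \<Lambda> a)"
      using set_integrable_mult_right[OF bnint, of "1 / n1 0"] eqfun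
      by (subst set_integrable_cong[where f' = "\<lambda>a. (1 / n1 0) * (b a * n1 a)"]) auto
    have "(LINT a:{0..}|lborel. b a * surv k \<Lambda> a) = (LINT a:{0..}|lborel. (1 / n1 0) * (b a * n1 a))"
      using eqfun by (intro set_lebesgue_integral_cong) auto
    also have "\<dots> = 1" using bc[symmetric] n0pos by simp
    finally show "(LINT a:{0..}|lborel. b a * surv k \<Lambda> a) = 1" .
  qed
  have Lpos: "\<Lambda> > 0"
  proof (rule ccontr)
    assume "\<not> \<Lambda> > 0"
    hence "\<Lambda> = 0" using Lnn by simp
    hence si: "set_integrable lborel {0..} (\<lambda>a. b a * surv k 0 a)"
      and v: "(LINT a:{0..}|lborel. b a * surv k 0 a) = 1"
      using charL by (simp_all add: solves_char_eq_def)
    have "(\<integral>\<^sup>+ a\<in>{0..}. ennreal (b a * surv k 0 a) \<partial>lborel)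
          = (\<integral>\<^sup>+ a. ennreal (indicator {0..} a *\<^sub>R (b a * surv k 0 a)) \<partial>lborel)"
      by (intro nn_integral_cong) (auto split: split_indicator)
    also have "\<dots> = ennreal (integral\<^sup>L lborel (\<lambda>a. indicator {0..} a *\<^sub>R (b a * surv k 0 a)))"
      using si b_nonneg by (intro nn_integral_eq_integral) (auto simp: set_integrable_def surv_def split: split_indicator)
    also have "\<dots> = 1" using v by (simp add: set_lebesgue_integral_def)
    finally show False using R0_gt1 by simp
  qed
  show ?thesis
  proof (intro exI[of _ \<Lambda>] conjI allI impI)
    show "\<Lambda> > 0" by (rule Lpos)
    show "solves_char_eq k b \<Lambda>" by (rule charL)
    show "n1 a = n1 0 * surv k \<Lambda> a" if "a \<ge> 0" for a using that by (rule sol)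
    fix lam assume sl: "solves_char_eq k b lam"
    have R0: "(\<integral>\<^sup>+ a\<in>{0..}. ennreal (b a * surv k 0 a) \<partial>lborel) \<noteq> 0" using R0_gt1 by auto
    show "lam = \<Lambda>"
    proof (cases lam \<Lambda> rule: linorder_cases)
      case less
      then show ?thesis using char_unique_aux[OF b_nonneg kint R0 sl charL] by blast
    next
      case greater
      then show ?thesis using char_unique_aux[OF b_nonneg kint R0 charL sl] by blast
    qed
  qed
qed

end
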